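(* Let $N$ be a finite or infinite set and $\mathcal A\subseteq\mathcal P(N)$ a field of sets over $N$. Let $v\colon\mathcal A\to\mathbb R$ be a coalition function with $v(\emptyset)=0$ which is bounded below (there is $L\in\mathbb R$ with $v(S)\ge L$ for all $S\in\mathcal A$). For each $\varepsilon>0$ define $v_\varepsilon\colon\mathcal A\to\mathbb R$ by $v_\varepsilon(N)=v(N)+\varepsilon$ and $v_\varepsilon(S)=v(S)$ for all $S\in\mathcal A\setminus\{N\}$. If $\mathrm{ba\text{-}core}(v_\varepsilon)\neq\emptyset$ for all $\varepsilon>0$, then $\mathrm{ba\text{-}core}(v)\neq\emptyset$.
   Context: A field of sets over $N$ is a collection $\mathcal A\subseteq\mathcal P(N)$ with $\emptyset\in\mathcal A$, closed under complements in $N$ and finite unions. $\mathrm{ba}(\mathcal A)$ is the set of bounded additive set functions $\mu\colon\mathcal A\to\mathbb R$ (bounded: $\sup_{S\in\mathcal A}|\mu(S)|<\infty$; additive: $\mu(S\cup T)=\mu(S)+\mu(T)$ for disjoint $S,T\in\mathcal A$). For a coalition function $w\colon\mathcal A\to\mathbb R$, $\mathrm{ba\text{-}core}(w)=\{\mu\in\mathrm{ba}(\mathcal A):\mu(N)=w(N),\ \mu(S)\ge w(S)\text{ for all }S\in\mathcal A\setminus\{N\}\}$. *)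

theory Defs
  imports Complex_Main "HOL-Library.FuncSet"
begin

definition field_of_sets :: "'a set \<Rightarrow> 'a set set \<Rightarrow> bool" where
  "field_of_sets N \<A> \<longleftrightarrow> \<A> \<subseteq> Pow N \<and> {} \<in> \<A> \<and>
     (\<forall>S\<in>\<A>. N - S \<in> \<A>) \<and> (\<forall>S\<in>\<A>. \<forall>T\<in>\<A>. S \<union> T \<in> \<A>)"

definition ba :: "'a set set \<Rightarrow> ('a set \<Rightarrow> real) set" where
  "ba \<A> = {\<mu> \<in> extensional \<A>.
      (\<exists>B. \<forall>S\<in>\<A>. \<bar>\<mu> S\<bar> \<le> B) \<and>
      (\<forall>S\<in>\<A>. \<forall>T\<in>\<A>. S \<inter> T = {} \<longrightarrow> \<mu> (S \<union> T) = \<mu> S + \<mu> T)}"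

definition ba_core :: "'a set \<Rightarrow> 'a set set \<Rightarrow> ('a set \<Rightarrow> real) \<Rightarrow> ('a set \<Rightarrow> real) set" where
  "ba_core N \<A> w = {\<mu> \<in> ba \<A>. \<mu> N = w N \<and> (\<forall>S\<in>\<A> - {N}. \<mu> S \<ge> w S)}"

end

theory Submission
  imports Defs "HOL-Analysis.Analysis"
begin

lemma cluster_closed:
  fixes x :: "'b::topological_space"
  assumes "inf (nhds x) F \<noteq> bot" "closed C" "eventually (\<lambda>y. y \<in> C) F"
  shows "x \<in> C"
proof (rule ccontr)
  assume "x \<notin> C"
  then have "eventually (\<lambda>y. y \<in> - C) (nhds x)"
    using assms(2) by (intro eventually_nhds_in_open) auto
  then have "eventually (\<lambda>y. False) (inf (nhds x) F)"
    using assms(3) unfolding eventually_inf by blast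
  then show False using assms(1) by (simp add: eventually_False)
qed

lemma closed_coord_le: "closed {f :: 'i \<Rightarrow> real. f i \<ge> c}"
  by (intro closed_Collect_le continuous_intros continuous_on_product_coordinates)

lemma closed_coord_ge: "closed {f :: 'i \<Rightarrow> real. f i \<le> c}"
  by (intro closed_Collect_le continuous_intros continuous_on_product_coordinates)

lemma closed_coord_add: "closed {f :: 'i \<Rightarrow> real. f a = f b + f c}"
  by (intro closed_Collect_eq continuous_intros continuous_on_product_coordinates)

lemma compact_box:
  fixes B :: "'i \<Rightarrow> real set"
  assumes "\<And>i. compact (B i)"
  shows "compact (PiE UNIV B)"
proof -
  have "compactin (product_topology (\<lambda>i. euclidean) UNIV) (PiE UNIV B)"
    unfolding compactin_PiE using assms by (simp add: compactin_euclidean_iff)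
  then show ?thesis by (simp add: euclidean_product_topology compactin_euclidean_iff)
qed

theorem corollary6:
  fixes N :: "'a set" and \<A> :: "'a set set" and v :: "'a set \<Rightarrow> real"
  assumes "field_of_sets N \<A>"
    and "v {} = 0"
    and "\<exists>L. \<forall>S\<in>\<A>. v S \<ge> L"
    and "\<forall>\<epsilon>>0. ba_core N \<A> (\<lambda>S. if S = N then v N + \<epsilon> else v S) \<noteq> {}"
  shows "ba_core N \<A> v \<noteq> {}"
proof -
  obtain L where L: "\<And>S. S \<in> \<A> \<Longrightarrow> v S \<ge> L" using assms(3) by auto
  have F: "\<A> \<subseteq> Pow N" "{} \<in> \<A>" "\<And>S. S \<in> \<A> \<Longrightarrow> N - S \<in> \<A>"
    "\<And>S T. S \<in> \<A> \<Longrightarrow> T \<in> \<A> \<Longrightarrow> S \<union> T \<in> \<A>"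
    using assms(1) unfolding field_of_sets_def by auto
  have NA: "N \<in> \<A>" using F(2,3) by force
  have "\<forall>n. \<exists>m. m \<in> ba_core N \<A> (\<lambda>S. if S = N then v N + 1 / Suc n else v S)"
  proof
    fix n
    have "(1::real) / real (Suc n) > 0" by simp
    then show "\<exists>m. m \<in> ba_core N \<A> (\<lambda>S. if S = N then v N + 1 / Suc n else v S)"
      using assms(4) by blast
  qed
  then obtain \<mu> where mu: "\<And>n. \<mu> n \<in> ba_core N \<A> (\<lambda>S. if S = N then v N + 1 / Suc n else v S)"
    by metis
  have muba: "\<mu> n \<in> extensional \<A>" and
    add: "\<And>S T. S \<in> \<A> \<Longrightarrow> T \<in> \<A> \<Longrightarrow> S \<inter> T = {} \<Longrightarrow> \<mu> n (S \<union> T) = \<mu> n S + \<mu> n T" and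
    muN: "\<mu> n N = v N + 1 / Suc n" and
    muS: "\<And>S. S \<in> \<A> \<Longrightarrow> S \<noteq> N \<Longrightarrow> \<mu> n S \<ge> v S" for n
    using mu[of n] unfolding ba_core_def ba_def by auto
  have lo: "\<mu> n S \<ge> L" if "S \<in> \<A>" for n S
  proof (cases "S = N")
    case True
    have "1 / real (Suc n) \<ge> 0" by simp
    moreover have "\<mu> n S = v N + 1 / real (Suc n)" using muN[of n] True by simp
    moreover have "L \<le> v N" using L NA by blast
    ultimately show ?thesis by linarith
  next
    case False then show ?thesis using L[OF that] muS[OF that, of n] by force
  qed
  have hi: "\<mu> n S \<le> v N + 1 - L" if "S \<in> \<A>" for n S
  proof -
    have "\<mu> n N = \<mu> n S + \<mu> n (N - S)"
    proof -
      have "S \<union> (N - S) = N" using that F(1) by blast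
      then show ?thesis using add[of S "N - S" n] that F(3) by auto
    qed
    moreover have "1 / real (Suc n) \<le> 1" by (simp add: divide_le_eq)
    ultimately show ?thesis using lo[OF F(3)[OF that], of n] muN[of n] by linarith
  qed
  define B where "B S = (if S \<in> \<A> then {L..v N + 1 - L} else {undefined})" for S
  have Kc: "compact (PiE UNIV B)" by (rule compact_box) (simp add: B_def)
  have muK: "\<mu> n \<in> PiE UNIV B" for n
    using lo hi muba[of n] by (auto simp: B_def PiE_def extensional_def)
  have "filtermap \<mu> sequentially \<noteq> bot" by (simp add: filtermap_bot_iff)
  moreover have "eventually (\<lambda>f. f \<in> PiE UNIV B) (filtermap \<mu> sequentially)"
    by (simp add: eventually_filtermap muK)
  ultimately obtain x where xK: "x \<in> PiE UNIV B" and xc: "inf (nhds x) (filtermap \<mu> sequentially) \<noteq> bot"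
    using Kc unfolding compact_filter by blast
  have cl: "x \<in> C" if "closed C" "\<And>n. n \<ge> k \<Longrightarrow> \<mu> n \<in> C" for C k
    using cluster_closed[OF xc that(1)] that(2)
    by (auto simp: eventually_filtermap eventually_sequentially)
  have xext: "x \<in> extensional \<A>" using xK by (auto simp: B_def PiE_def extensional_def Pi_def split: if_splits)
  have xb: "\<bar>x S\<bar> \<le> \<bar>L\<bar> + \<bar>v N + 1 - L\<bar>" if "S \<in> \<A>" for S
  proof -
    have "x S \<in> {L..v N + 1 - L}" using xK that unfolding B_def PiE_def Pi_def by (metis (mono_tags, lifting) IntD1 UNIV_I mem_Collect_eq)
    then show ?thesis by auto
  qed
  have xadd: "x (S \<union> T) = x S + x T" if "S \<in> \<A>" "T \<in> \<A>" "S \<inter> T = {}" for S T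
    using cl[OF closed_coord_add[of "S \<union> T" S T], of 0] add[OF that] by auto
  have xS: "x S \<ge> v S" if "S \<in> \<A>" "S \<noteq> N" for S
    using cl[OF closed_coord_le[of "v S" S], of 0] muS[OF that] by auto
  have xN1: "x N \<ge> v N"
    using cl[OF closed_coord_le[of "v N" N], of 0] muN by auto
  have xN2: "x N \<le> v N + 1 / Suc k" for k
  proof -
    have "\<mu> n N \<le> v N + 1 / Suc k" if "n \<ge> k" for n
    proof -
      have "1 / real (Suc n) \<le> 1 / real (Suc k)" using that by (simp add: frac_le)
      then show ?thesis using muN[of n] by linarith
    qed
    then show ?thesis using cl[OF closed_coord_ge[of N "v N + 1 / Suc k"], of k] by auto
  qed
  have "x N \<le> v N"
  proof (rule field_le_epsilon)
    fix e :: real assume "e > 0"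
    then obtain k where "1 / real (Suc k) < e" using nat_approx_posE by blast
    then show "x N \<le> v N + e" using xN2[of k] by linarith
  qed
  then have "x N = v N" using xN1 by linarith
  then have "x \<in> ba_core N \<A> v"
    unfolding ba_core_def ba_def using xext xb xadd xS by blast
  then show ?thesis by blast
qed

end
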